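(* Let $\alpha\in(0,\tfrac12)$ and $0<c<C'$. For $N=|\{k\in\mathbb{Z}^2:|k|<k_{\mathrm F}\}|$, consider the annulus $\mathcal A=\{p\in\mathbb{R}^2:k_{\mathrm F}\le|p|<k_{\mathrm F}+\Delta\}$ with thickness $\Delta$ satisfying $cN^{-\alpha}<\Delta<C'N^{-\alpha}$. Then there is a constant $C>0$ (independent of $N$, $\Delta$ and $k$) such that for all $k\in\mathbb{Z}^2\setminus\{0\}$, $$|\mathcal A\cap(\mathcal A+k)\cap\mathbb{Z}^2|\le C\big(N^{\frac34-\frac52\alpha}+N^{\frac14-\frac12\alpha}\big).$$
   Context: $k_{\mathrm F}>0$ is the Fermi momentum with $B_{\mathrm F}=\{k\in\mathbb{Z}^2:|k|<k_{\mathrm F}\}$, $N=|B_{\mathrm F}|$, and $k_{\mathrm F}^2=\frac12(\inf_{p\notin B_{\mathrm F}}|p|^2+\sup_{q\in B_{\mathrm F}}|q|^2)$ (so $k_{\mathrm F}\sim N^{1/2}$). *)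

theory Defs
  imports "HOL-Analysis.Analysis"
begin

text \<open>Lattice points of Z^2 are represented as pairs of integers; the plane R^2 as real \<times> real
  (whose library norm is the Euclidean norm sqrt(x^2+y^2)).\<close>

definition to_R2 :: "int \<times> int \<Rightarrow> real \<times> real" where
  "to_R2 q = (real_of_int (fst q), real_of_int (snd q))"

definition fermi_ball :: "real \<Rightarrow> (int \<times> int) set" where
  "fermi_ball kF = {q. norm (to_R2 q) < kF}"

definition admissible_kF :: "real \<Rightarrow> bool" where
  "admissible_kF kF \<longleftrightarrow> kF > 0 \<and>
     kF\<^sup>2 = (Inf {(norm (to_R2 p))\<^sup>2 | p. p \<notin> fermi_ball kF}
              + Sup {(norm (to_R2 q))\<^sup>2 | q. q \<in> fermi_ball kF}) / 2"

definition annulus :: "real \<Rightarrow> real \<Rightarrow> (real \<times> real) set" where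
  "annulus kF \<Delta> = {p. kF \<le> norm p \<and> norm p < kF + \<Delta>}"

end

theory Submission
  imports Defs
begin



lemma cell_card:
  fixes a b d :: real
  assumes "d > 0" "a \<le> b"
  shows "real (card {\<lfloor>a/d\<rfloor>..\<lfloor>b/d\<rfloor>}) \<le> (b - a)/d + 2"
proof -
  have le: "\<lfloor>a/d\<rfloor> \<le> \<lfloor>b/d\<rfloor>" using assms by (intro floor_mono) (simp add: divide_right_mono)
  have "real (card {\<lfloor>a/d\<rfloor>..\<lfloor>b/d\<rfloor>}) = real_of_int (\<lfloor>b/d\<rfloor> - \<lfloor>a/d\<rfloor> + 1)"
    using le by simp
  also have "\<dots> \<le> b/d - (a/d - 1) + 1"
    using of_int_floor_le[of "b/d"] real_of_int_floor_gt_diff_one[of "a/d"] by linarith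
  also have "\<dots> = (b-a)/d + 2" by (simp add: diff_divide_distrib)
  finally show ?thesis .
qed

lemma two_cells:
  fixes f :: "'a \<Rightarrow> real"
  assumes "d > 0" "0 \<le> lo" "lo \<le> hi" "\<And>x. x \<in> X \<Longrightarrow> lo \<le> \<bar>f x\<bar> \<and> \<bar>f x\<bar> \<le> hi"
  shows "real (card ((\<lambda>x. \<lfloor>f x / d\<rfloor>) ` X)) \<le> 2 * ((hi - lo)/d + 2)"
proof -
  have sub: "(\<lambda>x. \<lfloor>f x / d\<rfloor>) ` X \<subseteq> {\<lfloor>(-hi)/d\<rfloor>..\<lfloor>(-lo)/d\<rfloor>} \<union> {\<lfloor>lo/d\<rfloor>..\<lfloor>hi/d\<rfloor>}"
  proof
    fix z assume "z \<in> (\<lambda>x. \<lfloor>f x / d\<rfloor>) ` X"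
    then obtain x where x: "x \<in> X" "z = \<lfloor>f x / d\<rfloor>" by auto
    have b: "lo \<le> \<bar>f x\<bar>" "\<bar>f x\<bar> \<le> hi" using assms(4)[OF x(1)] by auto
    show "z \<in> {\<lfloor>(-hi)/d\<rfloor>..\<lfloor>(-lo)/d\<rfloor>} \<union> {\<lfloor>lo/d\<rfloor>..\<lfloor>hi/d\<rfloor>}"
    proof (cases "f x \<ge> 0")
      case True
      then have "lo \<le> f x" "f x \<le> hi" using b by auto
      then have "\<lfloor>lo/d\<rfloor> \<le> z" "z \<le> \<lfloor>hi/d\<rfloor>" using x(2) assms(1)
        by (auto intro!: floor_mono divide_right_mono)
      then show ?thesis by auto
    next
      case False
      then have "-hi \<le> f x" "f x \<le> -lo" using b by auto
      then have "(-hi)/d \<le> f x/d" "f x/d \<le> (-lo)/d" using assms(1)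
        by (simp_all only: divide_right_mono less_imp_le)
      then have "\<lfloor>(-hi)/d\<rfloor> \<le> z" "z \<le> \<lfloor>(-lo)/d\<rfloor>" using x(2)
        by (auto intro!: floor_mono)
      then show ?thesis by auto
    qed
  qed
  have "card ((\<lambda>x. \<lfloor>f x / d\<rfloor>) ` X) \<le> card ({\<lfloor>(-hi)/d\<rfloor>..\<lfloor>(-lo)/d\<rfloor>} \<union> {\<lfloor>lo/d\<rfloor>..\<lfloor>hi/d\<rfloor>})"
    by (rule card_mono[OF _ sub]) simp
  also have "\<dots> \<le> card {\<lfloor>(-hi)/d\<rfloor>..\<lfloor>(-lo)/d\<rfloor>} + card {\<lfloor>lo/d\<rfloor>..\<lfloor>hi/d\<rfloor>}"
    by (rule card_Un_le)
  finally have "real (card ((\<lambda>x. \<lfloor>f x / d\<rfloor>) ` X)) \<le> real (card {\<lfloor>(-hi)/d\<rfloor>..\<lfloor>(-lo)/d\<rfloor>}) + real (card {\<lfloor>lo/d\<rfloor>..\<lfloor>hi/d\<rfloor>})"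
    by linarith
  also have "\<dots> \<le> ((-lo) - (-hi))/d + 2 + ((hi - lo)/d + 2)"
    by (intro add_mono cell_card) (use assms in auto)
  finally show ?thesis by simp
qed

lemma sqrt_diff_le:
  fixes a b :: real
  assumes "0 \<le> a" "a \<le> b"
  shows "b - a \<le> sqrt (b^2 - a^2)" and "b * (b - a) \<le> b^2 - a^2"
proof -
  have "(b - a)^2 \<le> b^2 - a^2" using assms by (simp add: power2_eq_square algebra_simps mult_left_mono)
  then show "b - a \<le> sqrt (b^2 - a^2)" using assms real_le_rsqrt by auto
  show "b * (b - a) \<le> b^2 - a^2" using assms by (simp add: power2_eq_square algebra_simps mult_left_mono)
qed



lemma pt_facts:
  fixes x y k1 k2 R T :: real
  defines "n \<equiv> k1^2 + k2^2"
  defines "P \<equiv> x*k1 + y*k2" and "U \<equiv> y*k1 - x*k2"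
  assumes n: "n > 0"
    and a1: "R^2 \<le> x^2 + y^2" and a2: "x^2 + y^2 < R^2 + T"
    and b1: "R^2 \<le> (x-k1)^2 + (y-k2)^2" and b2: "(x-k1)^2 + (y-k2)^2 < R^2 + T"
  shows "\<bar>2*P - n\<bar> < T"
    and "n*R^2 - n^2/4 - T^2/4 < U^2" and "U^2 < n*R^2 - n^2/4 + n*T"
    and "n*R^2 - U^2 \<le> P^2" and "P^2 < n*R^2 + n*T - U^2"
proof -
  define A where "A = x^2 + y^2"
  define B where "B = (x-k1)^2 + (y-k2)^2"
  have iA: "P^2 + U^2 = n * A" unfolding P_def U_def n_def A_def by (simp add: power2_eq_square algebra_simps)
  have iB: "(P - n)^2 + U^2 = n * B" unfolding P_def U_def n_def B_def by (simp add: power2_eq_square algebra_simps)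
  have iE: "A - B = 2*P - n" unfolding P_def n_def A_def B_def by (simp add: power2_eq_square algebra_simps)
  have i4: "4*U^2 = 2*n*(A+B) - (2*P-n)^2 - n^2" using iA iB by (simp add: power2_eq_square algebra_simps)
  show E: "\<bar>2*P - n\<bar> < T" using iE a1 a2 b1 b2 unfolding A_def B_def by linarith
  have "\<bar>2*P-n\<bar>^2 < T^2" by (rule power_strict_mono) (use E in auto)
  then have E2: "(2*P-n)^2 < T^2" by simp
  have nA1: "n*R^2 \<le> n*A" using a1 n unfolding A_def by simp
  have nA2: "n*A < n*(R^2+T)" using a2 n unfolding A_def by simp
  have nB1: "n*R^2 \<le> n*B" using b1 n unfolding B_def by simp
  have nB2: "n*B < n*(R^2+T)" using b2 n unfolding B_def by simp
  show "n*R^2 - n^2/4 - T^2/4 < U^2" using i4 E2 nA1 nB1 by (simp add: algebra_simps)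
  have "0 \<le> (2*P-n)^2" by simp
  moreover have "n*A < n*R^2 + n*T" "n*B < n*R^2 + n*T" using nA2 nB2 by (simp_all add: algebra_simps)
  moreover have "4*U^2 = 2*(n*A) + 2*(n*B) - (2*P-n)^2 - n^2" using i4 by (simp add: algebra_simps)
  ultimately show "U^2 < n*R^2 - n^2/4 + n*T" by linarith
  show "n*R^2 - U^2 \<le> P^2" using iA nA1 by linarith
  show "P^2 < n*R^2 + n*T - U^2" using iA nA2 by (simp add: algebra_simps)
qed

lemma pair_sep:
  fixes x y x' y' k1 k2 :: int
  defines "n \<equiv> real_of_int (k1^2 + k2^2)"
  assumes n: "n > 0" and ne: "(x,y) \<noteq> (x',y')"
  shows "(real_of_int ((x*k1 + y*k2) - (x'*k1 + y'*k2)))^2 + (real_of_int ((y*k1 - x*k2) - (y'*k1 - x'*k2)))^2 \<ge> n"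
proof -
  have id: "((x*k1 + y*k2) - (x'*k1 + y'*k2))^2 + ((y*k1 - x*k2) - (y'*k1 - x'*k2))^2
      = (k1^2+k2^2) * ((x-x')^2 + (y-y')^2)" by (simp add: power2_eq_square algebra_simps)
  have d1: "(x-x')^2 + (y-y')^2 \<ge> 1"
  proof (cases "x = x'")
    case True
    then have "y \<noteq> y'" using ne by auto
    then have "(y-y')^2 \<ge> 1" by (smt (verit) power2_less_eq_zero_iff zero_le_power2 int_one_le_iff_zero_less)
    then show ?thesis by (smt (verit) zero_le_power2)
  next
    case False
    then have "(x-x')^2 \<ge> 1" by (smt (verit) power2_less_eq_zero_iff zero_le_power2 int_one_le_iff_zero_less)
    then show ?thesis by (smt (verit) zero_le_power2)
  qed
  have "(k1^2+k2^2) * ((x-x')^2 + (y-y')^2) \<ge> (k1^2+k2^2)"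
    using mult_left_mono[OF d1, of "k1^2+k2^2"] by simp
  then have "((x*k1 + y*k2) - (x'*k1 + y'*k2))^2 + ((y*k1 - x*k2) - (y'*k1 - x'*k2))^2 \<ge> k1^2+k2^2"
    using id by simp
  then show ?thesis unfolding n_def by (metis of_int_add of_int_le_iff of_int_power)
qed



lemma floor_eq_close:
  fixes a b :: real
  assumes "\<lfloor>a\<rfloor> = \<lfloor>b\<rfloor>" shows "\<bar>a - b\<bar> < 1"
  using assms of_int_floor_le[of a] of_int_floor_le[of b] real_of_int_floor_gt_diff_one[of a]
    real_of_int_floor_gt_diff_one[of b] by (smt (verit))

lemma two_cells_fin:
  fixes f :: "'a \<Rightarrow> real"
  assumes "d > 0" "\<And>x. x \<in> X \<Longrightarrow> \<bar>f x\<bar> \<le> hi"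
  shows "finite ((\<lambda>x. \<lfloor>f x / d\<rfloor>) ` X)"
proof (rule finite_subset[of _ "{\<lfloor>(-hi)/d\<rfloor>..\<lfloor>hi/d\<rfloor>}"])
  show "(\<lambda>x. \<lfloor>f x / d\<rfloor>) ` X \<subseteq> {\<lfloor>(-hi)/d\<rfloor>..\<lfloor>hi/d\<rfloor>}"
  proof
    fix z assume "z \<in> (\<lambda>x. \<lfloor>f x / d\<rfloor>) ` X"
    then obtain x where x: "x \<in> X" "z = \<lfloor>f x / d\<rfloor>" by auto
    have "-hi \<le> f x" "f x \<le> hi" using assms(2)[OF x(1)] by auto
    then have "(-hi)/d \<le> f x/d" "f x/d \<le> hi/d" using assms(1)
      by (simp_all only: divide_right_mono less_imp_le)
    then show "z \<in> {\<lfloor>(-hi)/d\<rfloor>..\<lfloor>hi/d\<rfloor>}" using x(2) by (auto intro!: floor_mono)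
  qed
qed simp

lemma sq_bounds:
  fixes u L M :: real
  assumes "L \<le> u^2" "u^2 \<le> M"
  shows "sqrt (max 0 L) \<le> \<bar>u\<bar>" "\<bar>u\<bar> \<le> sqrt (max 0 M)"
proof -
  have "max 0 L \<le> u^2" using assms by simp
  then have "sqrt (max 0 L) \<le> sqrt (u^2)" by (rule real_sqrt_le_mono)
  then show "sqrt (max 0 L) \<le> \<bar>u\<bar>" by simp
  have "u^2 \<le> max 0 M" using assms by simp
  then have "sqrt (u^2) \<le> sqrt (max 0 M)" by (rule real_sqrt_le_mono)
  then show "\<bar>u\<bar> \<le> sqrt (max 0 M)" by simp
qed

lemma sq_gap:
  fixes L W :: real
  assumes "W \<ge> 0"
  shows "sqrt (max 0 L) \<le> sqrt (max 0 (L + W))"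
    and "(sqrt (max 0 (L + W)))^2 - (sqrt (max 0 L))^2 \<le> W"
  using assms by (auto intro!: real_sqrt_le_mono simp: max_def)



lemma arith1:
  fixes a b s :: real
  assumes "a \<ge> 0" "b \<ge> 0" "s \<ge> 0" "D \<ge> 0" "D \<le> 2*a + b/2" "X \<le> 4*(D+2)*(s+2)"
  shows "X \<le> 16 * (b * s + a * s + b + a + s + 1)"
proof -
  have "4*(D+2)*(s+2) \<le> 4*(2*a + b/2 + 2)*(s+2)"
    using assms by (intro mult_right_mono mult_left_mono) auto
  also have "\<dots> = 8*a * s + 2*b * s + 8 * s + 16*a + 4*b + 16" by (simp add: algebra_simps)
  also have "\<dots> \<le> 16 * (b * s + a * s + b + a + s + 1)"
    using assms by (simp add: algebra_simps)
  finally show ?thesis using assms by linarith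
qed

lemma arith2:
  fixes a s :: real
  assumes "a \<ge> 0" "s \<ge> 0" "e1 \<ge> 0" "e2 \<ge> 0" "e1 \<le> 2*a" "e2 \<le> 2 * s + a"
    "X \<le> (e1 + 2) * (2*(e2 + 2))"
  shows "X \<le> 16 * (a*a * s*0 + a * s + a*a + a + s + 1)"
proof -
  have "(e1 + 2) * (2*(e2 + 2)) \<le> (2*a + 2) * (2*((2 * s+a) + 2))"
    using assms by (intro mult_mono) auto
  also have "\<dots> = 8*a * s + 4*a*a + 12*a + 8 * s + 8" by (simp add: algebra_simps)
  also have "\<dots> \<le> 16 * (a*a * s*0 + a * s + a*a + a + s + 1)"
    using assms by (simp add: algebra_simps)
  finally show ?thesis using assms by linarith
qed



lemma lens_count:
  fixes R T :: real and k1 k2 :: int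
  assumes R: "R \<ge> 1/2" and T: "T > 0" and k: "(k1,k2) \<noteq> (0,0)"
  defines "S \<equiv> {p::int\<times>int. R^2 \<le> (of_int (fst p))^2 + (of_int (snd p))^2
     \<and> (of_int (fst p))^2 + (of_int (snd p))^2 < R^2+T
     \<and> R^2 \<le> (of_int (fst p) - of_int k1)^2 + (of_int (snd p) - of_int k2)^2
     \<and> (of_int (fst p) - of_int k1)^2 + (of_int (snd p) - of_int k2)^2 < R^2+T}"
  shows "real (card S) \<le> 16 * (T*T* sqrt T/R + T* sqrt T/sqrt R + T*T/R + T/sqrt R + sqrt T + 1)"
proof -
  define n where "n = real_of_int (k1^2+k2^2)"
  have "k1^2 + k2^2 \<noteq> 0" using k by auto
  then have "k1^2 + k2^2 \<ge> 1"
    by (smt (verit) zero_le_power2)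
  then have n1: "n \<ge> 1" unfolding n_def by linarith
  define Pf where "Pf = (\<lambda>p::int\<times>int. real_of_int (fst p * k1 + snd p * k2))"
  define Ui where "Ui = (\<lambda>p::int\<times>int. snd p * k1 - fst p * k2)"
  define Uf where "Uf = (\<lambda>p. real_of_int (Ui p))"
  define H where "H = n*R^2 - n^2/4"
  define lo where "lo = sqrt (max 0 (H - T^2/4))"
  define hi where "hi = sqrt (max 0 (H + n*T))"
  define sn where "sn = sqrt n"
  define sR where "sR = sqrt R"
  define sT where "sT = sqrt T"
  have sn: "sn \<ge> 1" "sn^2 = n" using n1 unfolding sn_def by auto
  have sR: "sR > 0" "sR^2 = R" using R unfolding sR_def by auto
  have sT: "sT > 0" "sT^2 = T" using T unfolding sT_def by auto
  have pf: "\<bar>2*Pf p - n\<bar> < T \<and> H - T^2/4 < (Uf p)^2 \<and> (Uf p)^2 < H + n*T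
      \<and> n*R^2 - (Uf p)^2 \<le> (Pf p)^2 \<and> (Pf p)^2 < n*R^2 + n*T - (Uf p)^2" if p: "p \<in> S" for p
  proof -
    obtain x y where xy: "p = (x,y)" by fastforce
    have nn: "n = (of_int k1)^2 + (of_int k2)^2" unfolding n_def by simp
    have Pe: "Pf p = of_int x * of_int k1 + of_int y * of_int k2" unfolding Pf_def xy by simp
    have Ue: "Uf p = of_int y * of_int k1 - of_int x * of_int k2" unfolding Uf_def Ui_def xy by simp
    have as: "R^2 \<le> (of_int x)^2 + (of_int y)^2" "(of_int x)^2 + (of_int y)^2 < R^2 + T"
       "R^2 \<le> (of_int x - of_int k1)^2 + (of_int y - of_int k2)^2"
       "(of_int x - of_int k1)^2 + (of_int y - of_int k2)^2 < R^2 + T"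
      using p unfolding S_def xy by auto
    note q = pt_facts[of "of_int k1" "of_int k2" R "of_int x" "of_int y" T, OF _ as]
    show ?thesis using q n1 unfolding Pe Ue H_def nn by auto
  qed
  have Ub: "lo \<le> \<bar>Uf p\<bar> \<and> \<bar>Uf p\<bar> \<le> hi" if "p \<in> S" for p
    using sq_bounds[of "H - T^2/4" "Uf p" "H + n*T"] pf[OF that] unfolding lo_def hi_def by auto
  have lohi: "0 \<le> lo" "lo \<le> hi" "hi^2 - lo^2 \<le> n*T + T^2/4"
  proof -
    show "0 \<le> lo" unfolding lo_def by simp
    have W: "n*T + T^2/4 \<ge> 0" using n1 T by simp
    show "lo \<le> hi" using sq_gap(1)[OF W, of "H - T^2/4"] unfolding lo_def hi_def by (simp add: algebra_simps)
    show "hi^2 - lo^2 \<le> n*T + T^2/4" using sq_gap(2)[OF W, of "H - T^2/4"] unfolding lo_def hi_def by (simp add: algebra_simps)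
  qed
  have sep: "(Pf p - Pf q)^2 + (Uf p - Uf q)^2 \<ge> n" if "p \<noteq> q" for p q
  proof -
    obtain x y where xy: "p = (x,y)" by fastforce
    obtain x' y' where xy': "q = (x',y')" by fastforce
    have "n > 0" using n1 by simp
    from pair_sep[of k1 k2 x y x' y'] this that show ?thesis
      unfolding Pf_def Uf_def Ui_def xy xy' n_def by simp
  qed
  define a where "a = T / sR"
  define b where "b = T*T/R"
  have ab: "a \<ge> 0" "b \<ge> 0" using T sR R unfolding a_def b_def by auto
  have tgt: "16 * (b * sT + a * sT + b + a + sT + 1) = 16 * (T*T * sqrt T/R + T * sqrt T/sqrt R + T*T/R + T/sqrt R + sqrt T + 1)"
    unfolding a_def b_def sT_def sR_def by simp
  have W: "hi - lo \<le> sqrt (hi^2 - lo^2)" "hi * (hi - lo) \<le> hi^2 - lo^2"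
    using sqrt_diff_le[OF lohi(1) lohi(2)] by auto
  show ?thesis
  proof (cases "n \<le> R")
    case True
    define F where "F = (\<lambda>u. {p \<in> S. Ui p = u})"
    have Sun: "S = (\<Union>u\<in>Ui`S. F u)" by (auto simp: F_def)
    have imgU: "Ui ` S = (\<lambda>p. \<lfloor>Uf p / 1\<rfloor>) ` S" unfolding Uf_def by simp
    have finU: "finite (Ui ` S)" unfolding imgU
      by (rule two_cells_fin[of 1 S Uf hi]) (use Ub in auto)
    have cardU: "real (card (Ui ` S)) \<le> 2*((hi - lo)/1 + 2)" unfolding imgU
      by (rule two_cells) (use Ub lohi in auto)
    have fib: "real (card (F u)) \<le> 2*(sT + 2)" for u
    proof -
      define lo' where "lo' = sqrt (max 0 (n*R^2 - (of_int u)^2))"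
      define hi' where "hi' = sqrt (max 0 (n*R^2 - (of_int u)^2 + n*T))"
      have Pb: "lo' \<le> \<bar>Pf p\<bar> \<and> \<bar>Pf p\<bar> \<le> hi'" if "p \<in> F u" for p
      proof -
        have "p \<in> S" "Uf p = of_int u" using that unfolding F_def Uf_def by auto
        then have "n*R^2 - (of_int u)^2 \<le> (Pf p)^2" "(Pf p)^2 \<le> n*R^2 - (of_int u)^2 + n*T"
          using pf[of p] by auto
        from sq_bounds[OF this] show ?thesis
          unfolding lo'_def hi'_def by auto
      qed
      have nT: "n*T \<ge> 0" using n1 T by simp
      have lh': "0 \<le> lo'" "lo' \<le> hi'" "hi'^2 - lo'^2 \<le> n*T"
        using sq_gap[OF nT, of "n*R^2 - (of_int u)^2"] unfolding lo'_def hi'_def by auto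
      have "hi' - lo' \<le> sqrt (hi'^2 - lo'^2)" using sqrt_diff_le[OF lh'(1,2)] by auto
      also have "\<dots> \<le> sqrt (n*T)" using lh'(3) by (rule real_sqrt_le_mono)
      also have "\<dots> = sn * sT" unfolding sn_def sT_def by (simp add: real_sqrt_mult)
      finally have d: "(hi' - lo')/sn \<le> sT" using sn by (simp add: divide_le_eq mult.commute)
      have inj: "inj_on (\<lambda>p. \<lfloor>Pf p / sn\<rfloor>) (F u)"
      proof (rule inj_onI, rule ccontr)
        fix p q assume pq: "p \<in> F u" "q \<in> F u" "\<lfloor>Pf p / sn\<rfloor> = \<lfloor>Pf q / sn\<rfloor>" "p \<noteq> q"
        have "\<bar>Pf p / sn - Pf q / sn\<bar> < 1" by (rule floor_eq_close[OF pq(3)])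
        then have "\<bar>Pf p - Pf q\<bar> < sn" using sn by (simp add: diff_divide_distrib[symmetric] abs_divide divide_less_eq)
        then have "\<bar>Pf p - Pf q\<bar>^2 < sn^2" by (intro power_strict_mono) auto
        then have "(Pf p - Pf q)^2 < n" using sn by simp
        moreover have "Uf p = Uf q" using pq unfolding F_def Uf_def by auto
        ultimately show False using sep[OF pq(4)] by simp
      qed
      have "real (card (F u)) = real (card ((\<lambda>p. \<lfloor>Pf p / sn\<rfloor>) ` F u))" using card_image[OF inj] by simp
      also have "\<dots> \<le> 2 * ((hi' - lo')/sn + 2)"
        by (rule two_cells) (use sn Pb lh' in auto)
      also have "\<dots> \<le> 2*(sT + 2)" using d by (smt (verit))
      finally show ?thesis .
    qed
    have "card S \<le> (\<Sum>u\<in>Ui`S. card (F u))" using card_UN_le[OF finU, of F] Sun by simp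
    then have "real (card S) \<le> (\<Sum>u\<in>Ui`S. real (card (F u)))" by (metis of_nat_le_iff of_nat_sum)
    also have "\<dots> \<le> real (card (Ui`S)) * (2*(sT+2))" using sum_bounded_above[of "Ui`S" "\<lambda>u. real (card (F u))" "2*(sT+2)"] fib by simp
    also have "\<dots> \<le> (2*((hi - lo)/1 + 2)) * (2*(sT+2))" using cardU sT by (intro mult_right_mono) auto
    finally have cS: "real (card S) \<le> 4*((hi-lo)+2)*(sT+2)" by (simp add: algebra_simps)
    have "R*(2*R - 1) \<ge> 0" using R by (intro mult_nonneg_nonneg) auto
    then have "R \<le> 2*R^2" by (simp add: power2_eq_square right_diff_distrib)
    then have "n \<le> 2*R^2" using True by linarith
    then have "n*n \<le> n*(2*R^2)" using n1 by (intro mult_left_mono) auto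
    then have HH: "H \<ge> n*R^2/2" unfolding H_def by (simp add: power2_eq_square algebra_simps)
    have "hi^2 \<ge> H + n*T" unfolding hi_def by simp
    moreover have "n*T \<ge> 0" using n1 T by simp
    ultimately have "hi^2 \<ge> n*R^2/2" using HH by linarith
    moreover have "(sn*R/2)^2 = n*R^2/4" using sn by (simp add: power_mult_distrib power_divide)
    moreover have "n*R^2 \<ge> 0" using n1 by simp
    ultimately have "(sn*R/2)^2 \<le> hi^2" by linarith
    then have hiR: "sn*R/2 \<le> hi" by (rule power2_le_imp_le) (use lohi in linarith)
    have snR: "sn \<le> sR" unfolding sn_def sR_def using True by simp
    have c1: "(sn*R/2) * (hi - lo) \<le> n*T + T^2/4"
    proof -
      have "(sn*R/2) * (hi - lo) \<le> hi * (hi - lo)" using hiR lohi by (intro mult_right_mono) auto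
      then show ?thesis using W(2) lohi(3) by linarith
    qed
    have c2: "n*T + T^2/4 \<le> (sn*R/2) * (2*a + b/2)"
    proof -
      have "(sn*R/2) * (2*a + b/2) = sn* sR*T + sn*T*T/4"
        unfolding a_def b_def using sR R by (simp add: field_simps power2_eq_square)
      moreover have "n*T \<le> sn* sR*T"
      proof -
        have "sn * sn \<le> sn * sR" using snR sn by (intro mult_left_mono) auto
        moreover have "sn * sn = n" using sn(2) by (simp add: power2_eq_square)
        ultimately have "n \<le> sn * sR" by linarith
        then show ?thesis using T by (intro mult_right_mono) auto
      qed
      moreover have "T^2/4 \<le> sn*T*T/4" using sn T by (simp add: power2_eq_square)
      ultimately show ?thesis by linarith
    qed
    have pos: "sn*R/2 > 0" using sn R by simp
    have D: "hi - lo \<le> 2*a + b/2" using mult_le_cancel_left_pos[OF pos, of "hi - lo" "2*a + b/2"] c1 c2 by linarith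
    have "real (card S) \<le> 16 * (b * sT + a * sT + b + a + sT + 1)"
      by (rule arith1[OF ab sT(1)[THEN less_imp_le] _ D cS]) (use lohi in simp)
    then show ?thesis using tgt by simp
  next
    case False
    define c where "c = sqrt (n/2)"
    have c: "c > 0" "c^2 = n/2" using n1 unfolding c_def by auto
    have csn: "sn/2 \<le> c"
    proof -
      have "(sn/2)^2 = n/4" using sn by (simp add: power_divide)
      then have "(sn/2)^2 \<le> c^2" using c n1 by linarith
      then show ?thesis by (rule power2_le_imp_le) (use c in linarith)
    qed
    have snR: "sR \<le> sn" unfolding sn_def sR_def using False by simp
    define g where "g = (\<lambda>p. (\<lfloor>Pf p / c\<rfloor>, \<lfloor>Uf p / c\<rfloor>))"
    define A1 where "A1 = {\<lfloor>((n-T)/2)/c\<rfloor>..\<lfloor>((n+T)/2)/c\<rfloor>}"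
    define A2 where "A2 = (\<lambda>p. \<lfloor>Uf p / c\<rfloor>) ` S"
    have inj: "inj_on g S"
    proof (rule inj_onI, rule ccontr)
      fix p q assume pq: "p \<in> S" "q \<in> S" "g p = g q" "p \<noteq> q"
      have e: "\<lfloor>Pf p / c\<rfloor> = \<lfloor>Pf q / c\<rfloor>" "\<lfloor>Uf p / c\<rfloor> = \<lfloor>Uf q / c\<rfloor>" using pq(3) unfolding g_def by auto
      have "\<bar>Pf p / c - Pf q / c\<bar> < 1" by (rule floor_eq_close[OF e(1)])
      then have "\<bar>Pf p - Pf q\<bar> < c" using c by (simp add: diff_divide_distrib[symmetric] abs_divide divide_less_eq)
      then have "\<bar>Pf p - Pf q\<bar>^2 < c^2" by (intro power_strict_mono) auto
      then have 1: "(Pf p - Pf q)^2 < n/2" using c by simp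
      have "\<bar>Uf p / c - Uf q / c\<bar> < 1" by (rule floor_eq_close[OF e(2)])
      then have "\<bar>Uf p - Uf q\<bar> < c" using c by (simp add: diff_divide_distrib[symmetric] abs_divide divide_less_eq)
      then have "\<bar>Uf p - Uf q\<bar>^2 < c^2" by (intro power_strict_mono) auto
      then have 2: "(Uf p - Uf q)^2 < n/2" using c by simp
      show False using sep[OF pq(4)] 1 2 by simp
    qed
    have sub: "g ` S \<subseteq> A1 \<times> A2"
    proof
      fix z assume "z \<in> g ` S"
      then obtain p where p: "p \<in> S" "z = g p" by auto
      have "\<bar>2*Pf p - n\<bar> < T" using pf[OF p(1)] by simp
      then have "(n-T)/2 \<le> Pf p" "Pf p \<le> (n+T)/2" by auto
      then have "((n-T)/2)/c \<le> Pf p / c" "Pf p / c \<le> ((n+T)/2)/c" using c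
        by (simp_all only: divide_right_mono less_imp_le)
      then have "fst z \<in> A1" unfolding A1_def p(2) g_def by (auto intro!: floor_mono)
      moreover have "snd z \<in> A2" unfolding A2_def p(2) g_def using p(1) by auto
      ultimately show "z \<in> A1 \<times> A2" by (cases z) auto
    qed
    have finA2: "finite A2" unfolding A2_def by (rule two_cells_fin[of c S Uf hi]) (use c Ub in auto)
    have "card S \<le> card (A1 \<times> A2)"
      using card_inj_on_le[OF inj sub] finA2 unfolding A1_def by simp
    then have "card S \<le> card A1 * card A2" by (simp add: card_cartesian_product)
    then have "real (card S) \<le> real (card A1) * real (card A2)" by (metis of_nat_le_iff of_nat_mult)
    also have "\<dots> \<le> (T/c + 2) * (2*((hi - lo)/c + 2))"
    proof (rule mult_mono)
      have "real (card A1) \<le> ((n+T)/2 - (n-T)/2)/c + 2" unfolding A1_def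
        by (rule cell_card) (use c T in auto)
      moreover have "((n+T)/2 - (n-T)/2) = T" by (simp add: field_simps)
      ultimately show "real (card A1) \<le> T/c + 2" by simp
      show "real (card A2) \<le> 2*((hi - lo)/c + 2)" unfolding A2_def
        by (rule two_cells) (use c Ub lohi in auto)
    qed (use T c lohi in auto)
    finally have cS: "real (card S) \<le> (T/c + 2) * (2*((hi - lo)/c + 2))" .
    have e1: "T/c \<le> 2*a"
    proof -
      have "T/c \<le> T/(sn/2)" using csn sn T by (intro divide_left_mono) auto
      also have "\<dots> \<le> T/(sR/2)" using snR sR T by (intro divide_left_mono) auto
      finally show ?thesis unfolding a_def by (simp add: mult.commute)
    qed
    have e2: "(hi - lo)/c \<le> 2* sT + a"
    proof -
      have "hi - lo \<le> sqrt (n*T + T^2/4)" using W(1) lohi(3) by (smt (verit) real_sqrt_le_mono)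
      also have "\<dots> \<le> sn* sT + T/2"
      proof (rule real_le_lsqrt)
        show "0 \<le> sn* sT + T/2" using sn sT T by simp
        have "(sn* sT + T/2)^2 = n*T + sn* sT*T + T^2/4" using sn sT by (simp add: power2_eq_square algebra_simps)
        then show "n*T + T^2/4 \<le> (sn* sT + T/2)^2" using sn sT T by simp
      qed
      finally have hl: "hi - lo \<le> sn* sT + T/2" .
      have "(hi - lo)/c \<le> (hi - lo)/(sn/2)" using csn sn lohi by (intro divide_left_mono) auto
      also have "\<dots> \<le> (sn* sT + T/2)/(sn/2)" using hl sn by (intro divide_right_mono) auto
      also have "\<dots> = 2* sT + T/sn" using sn by (simp add: field_simps)
      also have "\<dots> \<le> 2* sT + T/sR" using snR sR T by (simp add: divide_left_mono)
      finally show ?thesis unfolding a_def .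
    qed
    have "real (card S) \<le> 16 * (a*a* sT*0 + a * sT + a*a + a + sT + 1)"
      by (rule arith2[OF ab(1) sT(1)[THEN less_imp_le] _ _ e1 e2 cS]) (use T c lohi in auto)
    moreover have "a*a = b" unfolding a_def b_def using sR by (simp add: power2_eq_square)
    moreover have "b * sT \<ge> 0" using ab sT by simp
    ultimately have "real (card S) \<le> 16 * (b * sT + a * sT + b + a + sT + 1)"
      by simp
    then show ?thesis using tgt by simp
  qed
qed

lemma final_arith:
  fixes q w r sT s3 :: real
  assumes q1: "q \<ge> 1" and w1: "w \<ge> 1" and qw: "q \<le> w" and r: "r \<ge> w/2"
    and sT0: "sT \<ge> 0" and sT: "sT \<le> s3 * q" and s3: "s3 \<ge> 0"
  shows "sT^5/r^2 + sT^3/r + sT^4/r^2 + sT^2/r + sT + 1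
     \<le> (4* s3^5 + s3^3 + 4* s3^4 + 2* s3^2 + s3 + 1) * (q^5/w^2 + q)"
proof -
  have w0: "w/2 > 0" using w1 by simp
  have sq0: "s3 * q \<ge> 0" using s3 q1 by simp
  have A: "0 \<le> q^5/w^2" "0 \<le> q" using q1 w1 by auto
  have p: "sT^k \<le> (s3*q)^k" for k :: nat using sT sT0 by (intro power_mono) auto
  have t1: "sT^5/r^2 \<le> 4* s3^5 * (q^5/w^2)"
  proof -
    have "sT^5/r^2 \<le> (s3*q)^5/(w/2)^2" by (rule frac_le) (use p sq0 w0 r in \<open>auto intro: power_mono\<close>)
    also have "\<dots> = 4* s3^5 * (q^5/w^2)" by (simp add: power_mult_distrib power_divide)
    finally show ?thesis .
  qed
  have key: "2*q^3/w \<le> q^5/w^2 + q"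
  proof -
    have "0 \<le> q*(q^2 - w)^2" using q1 by simp
    then have "2*q^3*w \<le> q^5 + q*w^2" by (simp add: power2_eq_square algebra_simps power_numeral_reduce)
    then show ?thesis using w1 by (simp add: field_simps power2_eq_square power_numeral_reduce)
  qed
  have t2: "sT^3/r \<le> s3^3 * (q^5/w^2 + q)"
  proof -
    have "sT^3/r \<le> (s3*q)^3/(w/2)" by (rule frac_le) (use p sq0 w0 r in auto)
    also have "\<dots> = s3^3 * (2*q^3/w)" by (simp add: power_mult_distrib)
    also have "\<dots> \<le> s3^3 * (q^5/w^2 + q)" using key s3 by (intro mult_left_mono) auto
    finally show ?thesis .
  qed
  have t3: "sT^4/r^2 \<le> 4* s3^4 * (q^5/w^2)"
  proof -
    have "sT^4/r^2 \<le> (s3*q)^4/(w/2)^2" by (rule frac_le) (use p sq0 w0 r in \<open>auto intro: power_mono\<close>)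
    also have "\<dots> = 4* s3^4 * (q^4/w^2)" by (simp add: power_mult_distrib power_divide)
    also have "\<dots> \<le> 4* s3^4 * (q^5/w^2)"
    proof -
      have "q^4 \<le> q^5" using q1 by (intro power_increasing) auto
      then have "q^4/w^2 \<le> q^5/w^2" by (intro divide_right_mono) auto
      then show ?thesis using s3 by (intro mult_left_mono) auto
    qed
    finally show ?thesis .
  qed
  have t4: "sT^2/r \<le> 2* s3^2 * q"
  proof -
    have "sT^2/r \<le> (s3*q)^2/(w/2)" by (rule frac_le) (use p sq0 w0 r in auto)
    also have "\<dots> = 2* s3^2 * (q*(q/w))" by (simp add: power_mult_distrib power2_eq_square)
    also have "\<dots> \<le> 2* s3^2 * (q*1)"
      using qw w1 q1 s3 by (intro mult_left_mono) (auto simp: divide_le_eq)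
    finally show ?thesis by simp
  qed
  have "sT^5/r^2 + sT^3/r + sT^4/r^2 + sT^2/r + sT + 1
     \<le> 4* s3^5 * (q^5/w^2) + s3^3 * (q^5/w^2 + q) + 4* s3^4 * (q^5/w^2) + 2* s3^2 * q + s3*q + q"
    using t1 t2 t3 t4 sT q1 by linarith
  also have "\<dots> \<le> (4* s3^5 + s3^3 + 4* s3^4 + 2* s3^2 + s3 + 1) * (q^5/w^2 + q)"
    using A s3 by (simp add: algebra_simps)
  finally show ?thesis .
qed

lemma norm_to_R2: "norm (to_R2 q) = sqrt ((of_int (fst q))^2 + (of_int (snd q))^2)"
  unfolding to_R2_def by (simp add: norm_Pair)

lemma ball_upper:
  fixes r :: real
  shows "finite (fermi_ball r)" "real (card (fermi_ball r)) \<le> (2*max 0 r + 1)^2"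
proof -
  define M where "M = \<lfloor>max 0 r\<rfloor>"
  have M0: "M \<ge> 0" unfolding M_def by simp
  have sub: "fermi_ball r \<subseteq> {-M..M} \<times> {-M..M}"
  proof
    fix q assume "q \<in> fermi_ball r"
    then have lt: "sqrt ((of_int (fst q))^2 + (of_int (snd q))^2) < r"
      unfolding fermi_ball_def norm_to_R2 by simp
    have "\<bar>of_int (fst q)\<bar> \<le> sqrt ((of_int (fst q))^2 + (of_int (snd q))^2)"
      by (rule real_le_rsqrt) simp
    then have "\<bar>of_int (fst q)\<bar> \<le> max 0 r" using lt by linarith
    then have a: "\<bar>fst q\<bar> \<le> M" unfolding M_def by (simp add: le_floor_iff)
    have "\<bar>of_int (snd q)\<bar> \<le> sqrt ((of_int (fst q))^2 + (of_int (snd q))^2)"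
      by (rule real_le_rsqrt) simp
    then have "\<bar>of_int (snd q)\<bar> \<le> max 0 r" using lt by linarith
    then have b: "\<bar>snd q\<bar> \<le> M" unfolding M_def by (simp add: le_floor_iff)
    show "q \<in> {-M..M} \<times> {-M..M}" using a b by (cases q) auto
  qed
  show "finite (fermi_ball r)" by (rule finite_subset[OF sub]) simp
  have "card (fermi_ball r) \<le> card ({-M..M} \<times> {-M..M})" by (rule card_mono[OF _ sub]) simp
  also have "\<dots> = nat (2*M+1) * nat (2*M+1)" by (simp add: card_cartesian_product)
  finally have "real (card (fermi_ball r)) \<le> real (nat (2*M+1)) * real (nat (2*M+1))"
    by (metis of_nat_le_iff of_nat_mult)
  also have "\<dots> = (of_int (2*M+1))^2" using M0 by (simp add: power2_eq_square)
  also have "\<dots> \<le> (2*max 0 r + 1)^2"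
  proof (rule power_mono)
    show "real_of_int (2*M+1) \<le> 2*max 0 r + 1" unfolding M_def using of_int_floor_le[of "max 0 r"] by simp
  qed (use M0 in simp)
  finally show "real (card (fermi_ball r)) \<le> (2*max 0 r + 1)^2" .
qed

lemma ball_lower:
  fixes r :: real
  assumes r: "r > 0"
  shows "real (card (fermi_ball r)) \<ge> r^2/4" "real (card (fermi_ball r)) \<ge> 1"
proof -
  define M where "M = \<lceil>r/2\<rceil> - 1"
  have M0: "M \<ge> 0" unfolding M_def using r by (simp add: le_diff_eq)
  have Mlt: "real_of_int M < r/2" unfolding M_def using ceiling_correct[of "r/2"] by linarith
  have Mge: "real_of_int M \<ge> r/2 - 1" unfolding M_def using ceiling_correct[of "r/2"] by linarith
  have sub: "{-M..M} \<times> {-M..M} \<subseteq> fermi_ball r"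
  proof
    fix q assume "q \<in> {-M..M} \<times> {-M..M}"
    then have a: "\<bar>fst q\<bar> \<le> M" "\<bar>snd q\<bar> \<le> M" by auto
    have "\<bar>real_of_int (fst q)\<bar> \<le> real_of_int M" using a(1) by (metis of_int_abs of_int_le_iff)
    then have "\<bar>real_of_int (fst q)\<bar>^2 \<le> (real_of_int M)^2" by (intro power_mono) auto
    then have "(of_int (fst q))^2 \<le> (real_of_int M)^2" by simp
    moreover have "\<bar>real_of_int (snd q)\<bar> \<le> real_of_int M" using a(2) by (metis of_int_abs of_int_le_iff)
    then have "\<bar>real_of_int (snd q)\<bar>^2 \<le> (real_of_int M)^2" by (intro power_mono) auto
    then have "(of_int (snd q))^2 \<le> (real_of_int M)^2" by simp
    moreover have "(real_of_int M)^2 < (r/2)^2" using Mlt M0 by (intro power_strict_mono) auto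
    moreover have "(r/2)^2 = r^2/4" by (simp add: power_divide)
    moreover have "(real_of_int M)^2 \<ge> 0" "r^2 \<ge> 0" by simp_all
    ultimately have "(of_int (fst q))^2 + (of_int (snd q))^2 < r^2"
      by linarith
    then have "sqrt ((of_int (fst q))^2 + (of_int (snd q))^2) < sqrt (r^2)"
      by (rule real_sqrt_less_mono)
    then have "sqrt ((of_int (fst q))^2 + (of_int (snd q))^2) < r" using r by simp
    then show "q \<in> fermi_ball r" unfolding fermi_ball_def norm_to_R2 by simp
  qed
  have fin: "finite (fermi_ball r)" by (rule ball_upper(1))
  have "card ({-M..M} \<times> {-M..M}) \<le> card (fermi_ball r)" by (rule card_mono[OF fin sub])
  moreover have "card ({-M..M} \<times> {-M..M}) = nat (2*M+1) * nat (2*M+1)" by (simp add: card_cartesian_product)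
  ultimately have "real (nat (2*M+1)) * real (nat (2*M+1)) \<le> real (card (fermi_ball r))"
    by (metis of_nat_le_iff of_nat_mult)
  moreover have "real (nat (2*M+1)) * real (nat (2*M+1)) = (of_int (2*M+1))^2" using M0 by (simp add: power2_eq_square)
  ultimately have B: "(real_of_int (2*M+1))^2 \<le> real (card (fermi_ball r))" by simp
  have one: "1 \<le> (real_of_int (2*M+1))^2" using M0 by simp
  then show "real (card (fermi_ball r)) \<ge> 1" using B by linarith
  show "real (card (fermi_ball r)) \<ge> r^2/4"
  proof (cases "r \<ge> 2")
    case True
    have "r/2 \<le> real_of_int (2*M+1)" using Mge True by simp
    then have "(r/2)^2 \<le> (real_of_int (2*M+1))^2" using r by (intro power_mono) auto
    then show ?thesis using B by (simp add: power_divide)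
  next
    case False
    then have "r^2 < 2^2" using r by (intro power_strict_mono) auto
    then show ?thesis using B one by simp
  qed
qed

lemma admissible_ge:
  assumes "admissible_kF kF"
  shows "kF \<ge> 1/2"
proof -
  define A where "A = {(norm (to_R2 p))\<^sup>2 | p. p \<notin> fermi_ball kF}"
  define B where "B = {(norm (to_R2 q))\<^sup>2 | q. q \<in> fermi_ball kF}"
  have kF: "kF > 0" and eq: "kF^2 = (Inf A + Sup B)/2" using assms unfolding admissible_kF_def A_def B_def by auto
  have z: "(0,0) \<in> fermi_ball kF" using kF unfolding fermi_ball_def to_R2_def by simp
  have "(\<lceil>kF\<rceil>, 0) \<notin> fermi_ball kF"
    unfolding fermi_ball_def norm_to_R2 using kF by (simp add: not_less le_of_int_ceiling)
  then have An: "A \<noteq> {}" unfolding A_def by auto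
  have A1: "1 \<le> x" if "x \<in> A" for x
  proof -
    obtain p where p: "p \<notin> fermi_ball kF" "x = (norm (to_R2 p))^2" using \<open>x \<in> A\<close> unfolding A_def by auto
    have "p \<noteq> (0,0)" using p z by auto
    then have "fst p \<noteq> 0 \<or> snd p \<noteq> 0" by (cases p) auto
    then have "(fst p)^2 + (snd p)^2 \<ge> 1"
      by (smt (verit) zero_le_power2 power2_less_eq_zero_iff int_one_le_iff_zero_less)
    then have "(of_int (fst p))^2 + (of_int (snd p))^2 \<ge> (1::real)"
      by (metis of_int_add of_int_le_iff of_int_power of_int_1)
    then show ?thesis using p(2) unfolding norm_to_R2 by simp
  qed
  have "1 \<le> Inf A" by (rule cInf_greatest[OF An A1])
  have n0: "(norm (to_R2 (0::int,0::int)))^2 = 0" by (simp add: to_R2_def zero_prod_def)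
  have "(norm (to_R2 (0::int,0::int)))^2 \<in> B" unfolding B_def using z by blast
  then have "0 \<in> B" using n0 by simp
  moreover have "bdd_above B"
  proof (rule bdd_aboveI)
    fix x assume "x \<in> B"
    then obtain q where q: "q \<in> fermi_ball kF" "x = (norm (to_R2 q))^2" unfolding B_def by auto
    then have "norm (to_R2 q) \<le> kF" unfolding fermi_ball_def by simp
    then show "x \<le> kF^2" using q(2) by (simp add: power_mono)
  qed
  ultimately have "0 \<le> Sup B" by (rule cSup_upper)
  then have "Inf A + Sup B \<ge> 1" using \<open>1 \<le> Inf A\<close> by linarith
  then have "kF^2 \<ge> 1/2" unfolding eq by simp
  show ?thesis
  proof (rule ccontr)
    assume "\<not> kF \<ge> 1/2"
    then have "kF^2 < (1/2)^2" using kF by (intro power_strict_mono) auto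
    moreover have "(1/2::real)^2 = 1/4" by (simp add: power2_eq_square)
    ultimately show False using \<open>kF^2 \<ge> 1/2\<close> by linarith
  qed
qed

lemma ann_sq:
  assumes "p \<in> annulus kF \<Delta>" "kF \<ge> 0"
  shows "kF^2 \<le> (fst p)^2 + (snd p)^2" "(fst p)^2 + (snd p)^2 < (kF+\<Delta>)^2"
proof -
  have np: "norm p = sqrt ((fst p)^2 + (snd p)^2)" by (cases p) (simp add: norm_Pair)
  have a: "kF \<le> sqrt ((fst p)^2 + (snd p)^2)" "sqrt ((fst p)^2 + (snd p)^2) < kF + \<Delta>"
  proof -
    have "kF \<le> norm p \<and> norm p < kF + \<Delta>" using assms(1) unfolding annulus_def by auto
    then show "kF \<le> sqrt ((fst p)^2 + (snd p)^2)" "sqrt ((fst p)^2 + (snd p)^2) < kF + \<Delta>"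
      unfolding np by auto
  qed
  have s0: "(fst p)^2 + (snd p)^2 \<ge> 0" by simp
  have "kF^2 \<le> (sqrt ((fst p)^2 + (snd p)^2))^2" using a(1) assms(2) by (intro power_mono) auto
  then show "kF^2 \<le> (fst p)^2 + (snd p)^2" using s0 by simp
  have "(sqrt ((fst p)^2 + (snd p)^2))^2 < (kF+\<Delta>)^2" using a(2) by (intro power_strict_mono) auto
  then show "(fst p)^2 + (snd p)^2 < (kF+\<Delta>)^2" using s0 by simp
qed

lemma count_sub:
  fixes kF \<Delta> :: real and k :: "int \<times> int"
  assumes kF: "kF > 0" and D: "\<Delta> > 0"
  shows "{q :: int \<times> int. to_R2 q \<in> annulus kF \<Delta> \<inter> ((\<lambda>a. a + to_R2 k) ` annulus kF \<Delta>)}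
    \<subseteq> {p::int\<times>int. kF^2 \<le> (of_int (fst p))^2 + (of_int (snd p))^2
     \<and> (of_int (fst p))^2 + (of_int (snd p))^2 < kF^2+((kF+\<Delta>)^2 - kF^2)
     \<and> kF^2 \<le> (of_int (fst p) - of_int (fst k))^2 + (of_int (snd p) - of_int (snd k))^2
     \<and> (of_int (fst p) - of_int (fst k))^2 + (of_int (snd p) - of_int (snd k))^2 < kF^2+((kF+\<Delta>)^2 - kF^2)}"
    (is "_ \<subseteq> ?S")
proof
  fix q assume "q \<in> {q :: int \<times> int. to_R2 q \<in> annulus kF \<Delta> \<inter> ((\<lambda>a. a + to_R2 k) ` annulus kF \<Delta>)}"
  then have q1: "to_R2 q \<in> annulus kF \<Delta>" and "to_R2 q \<in> (\<lambda>a. a + to_R2 k) ` annulus kF \<Delta>" by auto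
  then obtain a where a: "a \<in> annulus kF \<Delta>" "to_R2 q = a + to_R2 k" by auto
  have ae: "a = (of_int (fst q) - of_int (fst k), of_int (snd q) - of_int (snd k))"
    using a(2) unfolding to_R2_def by (cases a) auto
  note A = ann_sq[OF q1, of] ann_sq[OF a(1)]
  show "q \<in> ?S" using A kF unfolding ae unfolding to_R2_def by auto
qed

lemma S_fin:
  fixes R T :: real and k1 k2 :: int
  assumes "R + D > 0"
  shows "finite {p::int\<times>int. R^2 \<le> (of_int (fst p))^2 + (of_int (snd p))^2
     \<and> (of_int (fst p))^2 + (of_int (snd p))^2 < R^2+((R+D)^2 - R^2)
     \<and> R^2 \<le> (of_int (fst p) - of_int k1)^2 + (of_int (snd p) - of_int k2)^2
     \<and> (of_int (fst p) - of_int k1)^2 + (of_int (snd p) - of_int k2)^2 < R^2+((R+D)^2 - R^2)}"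
proof (rule finite_subset[OF _ ball_upper(1)[of "R+D"]], rule subsetI)
  fix p assume "p \<in> {p::int\<times>int. R^2 \<le> (of_int (fst p))^2 + (of_int (snd p))^2
     \<and> (of_int (fst p))^2 + (of_int (snd p))^2 < R^2+((R+D)^2 - R^2)
     \<and> R^2 \<le> (of_int (fst p) - of_int k1)^2 + (of_int (snd p) - of_int k2)^2
     \<and> (of_int (fst p) - of_int k1)^2 + (of_int (snd p) - of_int k2)^2 < R^2+((R+D)^2 - R^2)}"
  then have "(of_int (fst p))^2 + (of_int (snd p))^2 < (R+D)^2" by simp
  then have "sqrt ((of_int (fst p))^2 + (of_int (snd p))^2) < sqrt ((R+D)^2)" by (rule real_sqrt_less_mono)
  then show "p \<in> fermi_ball (R+D)" unfolding fermi_ball_def norm_to_R2 using assms by simp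
qed

theorem lemmaA4:
  fixes \<alpha> c C' :: real
  assumes "0 < \<alpha>" and "\<alpha> < 1/2" and "0 < c" and "c < C'"
  shows "\<exists>C > 0. \<forall>kF \<Delta> (k :: int \<times> int).
           admissible_kF kF \<longrightarrow>
           c * real (card (fermi_ball kF)) powr (-\<alpha>) < \<Delta> \<longrightarrow>
           \<Delta> < C' * real (card (fermi_ball kF)) powr (-\<alpha>) \<longrightarrow>
           k \<noteq> (0, 0) \<longrightarrow>
           real (card {q :: int \<times> int. to_R2 q \<in> annulus kF \<Delta> \<inter>
                          ((\<lambda>a. a + to_R2 k) ` annulus kF \<Delta>)})
             \<le> C * (real (card (fermi_ball kF)) powr (3/4 - 5/2 * \<alpha>)
                    + real (card (fermi_ball kF)) powr (1/4 - 1/2 * \<alpha>))"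
proof -
  have Cp: "C' > 0" using assms by linarith
  define c3 where "c3 = C' * (4 + C')"
  define s3 where "s3 = sqrt c3"
  define K where "K = 4* s3^5 + s3^3 + 4* s3^4 + 2* s3^2 + s3 + 1"
  have c3p: "c3 > 0" unfolding c3_def using Cp by simp
  have s3p: "s3 \<ge> 0" unfolding s3_def using c3p by simp
  have "0 \<le> s3^5" "0 \<le> s3^3" "0 \<le> s3^4" "0 \<le> s3^2" using s3p by simp_all
  then have Kp: "K > 0" unfolding K_def using s3p by linarith
  show ?thesis
  proof (rule exI[of _ "16*K"], intro conjI allI impI)
    show "16*K > 0" using Kp by simp
    fix kF \<Delta> :: real and k :: "int \<times> int"
    assume adm: "admissible_kF kF"
      and lowD: "c * real (card (fermi_ball kF)) powr (-\<alpha>) < \<Delta>"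
      and upD: "\<Delta> < C' * real (card (fermi_ball kF)) powr (-\<alpha>)"
      and k0: "k \<noteq> (0,0)"
    define N where "N = real (card (fermi_ball kF))"
    have kF: "kF > 0" using adm unfolding admissible_kF_def by simp
    have kF2: "kF \<ge> 1/2" by (rule admissible_ge[OF adm])
    have N1: "N \<ge> 1" unfolding N_def by (rule ball_lower(2)[OF kF])
    have Nlow: "N \<ge> kF^2/4" unfolding N_def by (rule ball_lower(1)[OF kF])
    have Nup: "N \<le> (2*kF+1)^2" unfolding N_def using ball_upper(2)[of kF] kF by simp
    define q where "q = N powr (1/4 - 1/2*\<alpha>)"
    define w where "w = N powr (1/4)"
    have N0: "N > 0" using N1 by simp
    have q1: "q \<ge> 1" unfolding q_def using N1 assms by (intro ge_one_powr_ge_zero) auto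
    have w1: "w \<ge> 1" unfolding w_def using N1 by (intro ge_one_powr_ge_zero) auto
    have qw: "q \<le> w" unfolding q_def w_def using N1 assms by (intro powr_mono) auto
    have w2: "w^2 = sqrt N"
    proof -
      have "w^2 = N powr (of_nat 2 * (1/4))" unfolding w_def using N0 by (intro powr_power) auto
      also have "\<dots> = N powr (1/2)" by simp
      also have "\<dots> = sqrt N" using N0 by (simp add: powr_half_sqrt)
      finally show ?thesis .
    qed
    have w2': "w^2 = N powr (1/2)" using w2 N0 by (simp add: powr_half_sqrt)
    have q2: "q^2 = N powr (1/2 - \<alpha>)"
    proof -
      have "q^2 = N powr (of_nat 2 * (1/4 - 1/2*\<alpha>))" unfolding q_def using N0 by (intro powr_power) auto
      also have "of_nat 2 * (1/4 - 1/2*\<alpha>) = 1/2 - \<alpha>" by simp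
      finally show ?thesis .
    qed
    have q5: "q^5 = N powr (5/4 - 5/2*\<alpha>)"
    proof -
      have "q^5 = N powr (of_nat 5 * (1/4 - 1/2*\<alpha>))" unfolding q_def using N0 by (intro powr_power) auto
      also have "of_nat 5 * (1/4 - 1/2*\<alpha>) = 5/4 - 5/2*\<alpha>" by simp
      finally show ?thesis .
    qed
    have Pa: "N powr (-\<alpha>) = q^2/w^2"
    proof -
      have "N powr (-\<alpha>) = N powr ((1/2 - \<alpha>) - 1/2)" by simp
      also have "\<dots> = N powr (1/2 - \<alpha>) / N powr (1/2)" by (rule powr_diff)
      finally show ?thesis using q2 w2' by simp
    qed
    have P1: "N powr (3/4 - 5/2*\<alpha>) = q^5/w^2"
    proof -
      have "N powr (3/4 - 5/2*\<alpha>) = N powr ((5/4 - 5/2*\<alpha>) - 1/2)" by simp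
      also have "\<dots> = N powr (5/4 - 5/2*\<alpha>) / N powr (1/2)" by (rule powr_diff)
      finally show ?thesis using q5 w2' by simp
    qed
    have P2: "N powr (1/4 - 1/2*\<alpha>) = q" unfolding q_def ..
    have w0: "w > 0" using w1 by simp
    have D0: "\<Delta> > 0"
    proof -
      have "c * N powr (-\<alpha>) > 0" using assms N0 by simp
      then show ?thesis using lowD unfolding N_def by linarith
    qed
    have Dup: "\<Delta> \<le> C' * (q^2/w^2)" using upD Pa unfolding N_def by simp
    have qw2: "q^2/w^2 \<le> 1"
    proof -
      have "q^2 \<le> w^2" using qw q1 by (intro power_mono) auto
      then show ?thesis using w0 by simp
    qed
    have DC: "\<Delta> \<le> C'" using Dup qw2 Cp by (smt (verit) mult_left_le)
    have kFup: "kF \<le> 2*w^2"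
    proof -
      have "kF^2 \<le> (2* sqrt N)^2" using Nlow N0 by (simp add: power_mult_distrib)
      then have "kF \<le> 2* sqrt N" by (rule power2_le_imp_le) (use N0 in simp)
      then show ?thesis using w2 by simp
    qed
    have kFlow: "w^2/4 \<le> kF"
    proof -
      have "sqrt N \<le> sqrt ((2*kF+1)^2)" using Nup by (rule real_sqrt_le_mono)
      then have "sqrt N \<le> 2*kF + 1" using kF by simp
      then show ?thesis using w2 kF2 by linarith
    qed
    define T where "T = (kF+\<Delta>)^2 - kF^2"
    have Te: "T = \<Delta> * (2*kF + \<Delta>)" unfolding T_def by (simp add: power2_eq_square algebra_simps)
    have T0: "T > 0" unfolding Te using D0 kF by simp
    have Tle: "T \<le> c3 * q^2"
    proof -
      have "T \<le> (C' * (q^2/w^2)) * (2*kF + \<Delta>)" unfolding Te using Dup D0 kF by (intro mult_right_mono) auto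
      also have "\<dots> \<le> (C' * (q^2/w^2)) * (4*w^2 + C')"
        using kFup DC Cp q1 w0 by (intro mult_left_mono) auto
      also have "\<dots> = C' * q^2 * (4 + C'/w^2)" using w0 by (simp add: field_simps)
      also have "\<dots> \<le> C' * q^2 * (4 + C')"
      proof -
        have "C'/w^2 \<le> C'" using Cp w1 by (simp add: divide_le_eq)
        then show ?thesis using Cp q1 by (intro mult_left_mono) auto
      qed
      finally show ?thesis unfolding c3_def by (simp add: algebra_simps)
    qed
    define sT where "sT = sqrt T"
    define r where "r = sqrt kF"
    have sT0: "sT \<ge> 0" unfolding sT_def using T0 by simp
    have sTle: "sT \<le> s3 * q"
    proof -
      have "sT \<le> sqrt (c3 * q^2)" unfolding sT_def using Tle by (rule real_sqrt_le_mono)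
      also have "\<dots> = s3 * q" unfolding s3_def using q1 by (simp add: real_sqrt_mult)
      finally show ?thesis .
    qed
    have rge: "r \<ge> w/2"
    proof -
      have "sqrt ((w/2)^2) \<le> sqrt kF" using kFlow by (intro real_sqrt_le_mono) (simp add: power_divide)
      then show ?thesis unfolding r_def using w0 by simp
    qed
    have r0: "r > 0" unfolding r_def using kF by simp
    have kFr: "kF = r^2" unfolding r_def using kF by simp
    have Ts: "T = sT^2" unfolding sT_def using T0 by simp
    have kk: "(fst k, snd k) \<noteq> (0,0)" using k0 by (cases k) auto
    note sub = count_sub[OF kF D0, of k]
    have fin: "finite {p::int\<times>int. kF^2 \<le> (of_int (fst p))^2 + (of_int (snd p))^2
     \<and> (of_int (fst p))^2 + (of_int (snd p))^2 < kF^2+((kF+\<Delta>)^2 - kF^2)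
     \<and> kF^2 \<le> (of_int (fst p) - of_int (fst k))^2 + (of_int (snd p) - of_int (snd k))^2
     \<and> (of_int (fst p) - of_int (fst k))^2 + (of_int (snd p) - of_int (snd k))^2 < kF^2+((kF+\<Delta>)^2 - kF^2)}"
      by (rule S_fin) (use kF D0 in simp)
    have "real (card {q :: int \<times> int. to_R2 q \<in> annulus kF \<Delta> \<inter> ((\<lambda>a. a + to_R2 k) ` annulus kF \<Delta>)})
      \<le> real (card {p::int\<times>int. kF^2 \<le> (of_int (fst p))^2 + (of_int (snd p))^2
     \<and> (of_int (fst p))^2 + (of_int (snd p))^2 < kF^2+((kF+\<Delta>)^2 - kF^2)
     \<and> kF^2 \<le> (of_int (fst p) - of_int (fst k))^2 + (of_int (snd p) - of_int (snd k))^2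
     \<and> (of_int (fst p) - of_int (fst k))^2 + (of_int (snd p) - of_int (snd k))^2 < kF^2+((kF+\<Delta>)^2 - kF^2)})"
      using card_mono[OF fin sub] by simp
    also have "\<dots> \<le> 16 * (T*T * sqrt T/kF + T * sqrt T/sqrt kF + T*T/kF + T/sqrt kF + sqrt T + 1)"
      unfolding T_def[symmetric] by (rule lens_count[OF kF2 T0 kk])
    also have "\<dots> = 16 * (sT^5/r^2 + sT^3/r + sT^4/r^2 + sT^2/r + sT + 1)"
      unfolding sT_def[symmetric] r_def[symmetric] Ts kFr using sT0 r0 by (simp add: power_numeral_reduce power2_eq_square algebra_simps)
    also have "\<dots> \<le> 16 * (K * (q^5/w^2 + q))"
      unfolding K_def by (intro mult_left_mono final_arith[OF q1 w1 qw rge sT0 sTle s3p]) simp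
    also have "\<dots> = 16*K * (N powr (3/4 - 5/2 * \<alpha>) + N powr (1/4 - 1/2 * \<alpha>))"
      unfolding P1 P2 by simp
    finally show "real (card {q :: int \<times> int. to_R2 q \<in> annulus kF \<Delta> \<inter> ((\<lambda>a. a + to_R2 k) ` annulus kF \<Delta>)})
      \<le> 16*K * (real (card (fermi_ball kF)) powr (3/4 - 5/2 * \<alpha>)
                    + real (card (fermi_ball kF)) powr (1/4 - 1/2 * \<alpha>))" unfolding N_def .
  qed
qed

end
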